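(* For each integer $k\geq -1$, there is a polynomial $h_k(t)\in\mathbb{Q}[t]$ of degree $\lceil k/2\rceil$ such that for all $g\geq \frac{9k+7}{2}$, \[\#\{S\in\mathcal{S}_g\mid e(S)=g-k\}=h_k(g).\] Moreover, $\lceil k/2\rceil!\,h_k(t)$ is a monic polynomial with integer coefficients.
   Context: A numerical semigroup $S$ is a submonoid of $\mathbb{N}_0$ with finite complement; its genus is $|\mathbb{N}_0\setminus S|$. The embedding dimension $e(S)$ is the size of the minimal generating set $(S\setminus\{0\})\setminus((S\setminus\{0\})+(S\setminus\{0\}))$. $\mathcal{S}_g$ is the set of numerical semigroups of genus $g$. *)

theory Defs
  imports Main "HOL-Computational_Algebra.Polynomial"
begin

definition numerical_semigroup :: "nat set \<Rightarrow> bool" where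
  "numerical_semigroup S \<longleftrightarrow>
     0 \<in> S \<and> (\<forall>a\<in>S. \<forall>b\<in>S. a + b \<in> S) \<and> finite (UNIV - S)"

definition genus :: "nat set \<Rightarrow> nat" where
  "genus S = card (UNIV - S)"

text \<open>Embedding dimension: size of the minimal generating set
  (S minus 0) minus ((S minus 0) + (S minus 0)).\<close>
definition embedding_dimension :: "nat set \<Rightarrow> nat" where
  "embedding_dimension S =
     card ((S - {0}) - {a + b | a b. a \<in> S - {0} \<and> b \<in> S - {0}})"

definition semigroups_of_genus :: "nat \<Rightarrow> nat set set" where
  "semigroups_of_genus g = {S. numerical_semigroup S \<and> genus S = g}"

end

theory Submission
  imports Defs
begin

definition MG :: "nat set \<Rightarrow> nat set" where
  "MG S = (S - {0}) - {a + b | a b. a \<in> S - {0} \<and> b \<in> S - {0}}"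

lemma ed_MG: "embedding_dimension S = card (MG S)"
  by (simp add: embedding_dimension_def MG_def)

lemma ns_add: "numerical_semigroup S \<Longrightarrow> a \<in> S \<Longrightarrow> b \<in> S \<Longrightarrow> a + b \<in> S"
  by (simp add: numerical_semigroup_def)

lemma ns_zero: "numerical_semigroup S \<Longrightarrow> 0 \<in> S"
  by (simp add: numerical_semigroup_def)

lemma ns_fin: "numerical_semigroup S \<Longrightarrow> finite (UNIV - S)"
  by (simp add: numerical_semigroup_def)

lemma ns_mult_in: "numerical_semigroup S \<Longrightarrow> m \<in> S \<Longrightarrow> m * q \<in> S"
  by (induction q) (auto simp: ns_zero ns_add add.commute)

lemma ns_large: assumes "numerical_semigroup S" shows "\<exists>n. \<forall>x\<ge>n. x \<in> S"
proof -
  from ns_fin[OF assms] obtain n where "\<forall>x\<in>UNIV - S. x < n"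
    using finite_nat_bounded by blast
  then show ?thesis by (meson DiffI UNIV_I not_less)
qed

definition mult :: "nat set \<Rightarrow> nat" where
  "mult S = (LEAST x. x \<in> S \<and> 0 < x)"

lemma mult_props:
  assumes "numerical_semigroup S"
  shows "mult S \<in> S" "0 < mult S" "\<And>x. x \<in> S \<Longrightarrow> 0 < x \<Longrightarrow> mult S \<le> x"
proof -
  obtain n where n: "\<forall>x\<ge>n. x \<in> S" using ns_large[OF assms] by blast
  have ex: "Suc n \<in> S \<and> 0 < Suc n" using n by auto
  show "mult S \<in> S" "0 < mult S" unfolding mult_def using LeastI[of "\<lambda>x. x \<in> S \<and> 0 < x", OF ex] by auto
  show "\<And>x. x \<in> S \<Longrightarrow> 0 < x \<Longrightarrow> mult S \<le> x" unfolding mult_def by (auto intro: Least_le)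
qed

lemma e_le_m:
  assumes ns: "numerical_semigroup S"
  shows "card (MG S) \<le> mult S"
proof -
  let ?m = "mult S"
  have m: "?m \<in> S" "0 < ?m" using mult_props[OF ns] by auto
  have inj: "inj_on (\<lambda>x. x mod ?m) (MG S)"
  proof (rule inj_onI, rule ccontr)
    fix x y assume x: "x \<in> MG S" and y: "y \<in> MG S" and eq: "x mod ?m = y mod ?m" and ne: "x \<noteq> y"
    have key: "False" if x: "x \<in> MG S" and y: "y \<in> MG S" and eq: "x mod ?m = y mod ?m" and lt: "x < y" for x y
    proof -
      have "?m dvd y - x" using eq lt mod_eq_dvd_iff_nat[of x y ?m] by simp
      then obtain q where q: "y - x = ?m * q" by blast
      have "q > 0" using q lt by (cases q) auto
      have "?m * q \<in> S" using ns_mult_in[OF ns m(1)] .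
      moreover have "?m * q \<noteq> 0" using \<open>q>0\<close> m(2) by simp
      moreover have "x \<in> S - {0}" using x by (auto simp: MG_def)
      moreover have "y = x + ?m * q" using q lt by simp
      ultimately have "y \<in> {a + b |a b. a \<in> S - {0} \<and> b \<in> S - {0}}" by fastforce
      then show False using y unfolding MG_def by blast
    qed
    show False
    proof (cases "x < y")
      case True then show ?thesis using key x y eq by blast
    next
      case False then have "y < x" using ne by simp
      then show ?thesis using key x y eq by metis
    qed
  qed
  have "(\<lambda>x. x mod ?m) ` MG S \<subseteq> {..<?m}" using m(2) by auto
  then have "card ((\<lambda>x. x mod ?m) ` MG S) \<le> ?m" by (metis card_lessThan card_mono finite_lessThan)
  then show ?thesis using card_image[OF inj] by simp
qed

definition gapsabove :: "nat set \<Rightarrow> nat \<Rightarrow> nat set" where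
  "gapsabove S m = {x. m < x \<and> x \<notin> S}"

lemma genus_split:
  assumes ns: "numerical_semigroup S"
  shows "genus S = (mult S - 1) + card (gapsabove S (mult S))"
    "finite (gapsabove S (mult S))"
proof -
  let ?m = "mult S"
  note m = mult_props[OF ns]
  have eq: "UNIV - S = {1..<?m} \<union> gapsabove S ?m"
  proof (rule set_eqI)
    fix x
    show "x \<in> UNIV - S \<longleftrightarrow> x \<in> {1..<?m} \<union> gapsabove S ?m"
      using m(1) m(2) m(3)[of x] ns_zero[OF ns]
      by (cases "x = 0"; cases "x = ?m"; cases "x < ?m"; auto simp: gapsabove_def)
  qed
  have sub: "gapsabove S ?m \<subseteq> UNIV - S" by (auto simp: gapsabove_def)
  have fin: "finite (gapsabove S ?m)" using finite_subset[OF sub ns_fin[OF ns]] .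
  then show "finite (gapsabove S (mult S))" .
  have "genus S = card ({1..<?m} \<union> gapsabove S ?m)" by (simp add: genus_def eq)
  also have "\<dots> = card {1..<?m} + card (gapsabove S ?m)"
    apply (rule card_Un_disjoint)
    apply simp
    apply (rule fin)
    by (auto simp: gapsabove_def)
  finally show "genus S = (mult S - 1) + card (gapsabove S (mult S))" by simp
qed


definition PA :: "nat set \<Rightarrow> nat set" where
  "PA A = {a \<in> A. \<forall>c. 0 < c \<and> c < a \<longrightarrow> c \<in> A \<or> a - c \<in> A}"

definition Phi :: "nat \<Rightarrow> nat set \<Rightarrow> nat set \<Rightarrow> nat set" where
  "Phi m A B = {0} \<union> ({m..} - (\<lambda>a. m + a) ` A - (\<lambda>b. 2*m + b) ` B)"

definition Aof :: "nat set \<Rightarrow> nat set" where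
  "Aof S = {a. 0 < a \<and> a < mult S \<and> mult S + a \<notin> S}"

definition Bof :: "nat set \<Rightarrow> nat set" where
  "Bof S = {b. 0 < b \<and> b < mult S \<and> 2 * mult S + b \<notin> S}"

lemma PA_sub: "PA A \<subseteq> A" by (auto simp: PA_def)

lemma pairs:
  assumes m: "0 < m" "m \<in> S" and fin: "finite (gapsabove S m)"
    and small: "2 * card (gapsabove S m) < m" and y: "3*m \<le> y"
  shows "\<exists>x. m \<le> x \<and> x \<in> S \<and> y - x \<in> S \<and> m \<le> y - x \<and> x \<le> y"
proof (rule ccontr)
  assume H: "\<not> ?thesis"
  let ?G = "gapsabove S m"
  let ?j = "card ?G"
  define f where "f x = (if x \<in> S then y - x else x)" for x
  have range: "f x \<in> ?G" if "x \<in> {m..m + ?j}" for x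
  proof -
    have x: "m \<le> x" "x \<le> m + ?j" using that by auto
    have "m \<le> y - x" "x \<le> y" using x small y by auto
    show ?thesis
    proof (cases "x \<in> S")
      case True
      then have "y - x \<notin> S" using H x \<open>m \<le> y - x\<close> \<open>x \<le> y\<close> by blast
      moreover have "m < y - x" using x small y by auto
      ultimately show ?thesis using True by (simp add: f_def gapsabove_def)
    next
      case False
      then have "x \<noteq> m" using m by auto
      then show ?thesis using False x by (simp add: f_def gapsabove_def)
    qed
  qed
  have inj: "inj_on f {m..m + ?j}"
  proof (rule inj_onI)
    fix x x' assume x: "x \<in> {m..m + ?j}" and x': "x' \<in> {m..m + ?j}" and eq: "f x = f x'"
    have b: "x + x' < y" using x x' small y by auto
    show "x = x'"
      using eq b x x' small y by (auto simp: f_def split: if_splits)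
  qed
  have "f ` {m..m + ?j} \<subseteq> ?G" using range by auto
  then have "card (f ` {m..m + ?j}) \<le> ?j" using card_mono fin by blast
  then have "card {m..m + ?j} \<le> ?j" using card_image[OF inj] by simp
  then show False by simp
qed

context
  fixes m :: nat and A B :: "nat set"
  assumes m0: "0 < m" and Asub: "A \<subseteq> {0<..<m}" and BPA: "B \<subseteq> PA A"
begin

lemma Bsub: "B \<subseteq> A" using BPA PA_sub by blast
lemma Bsub': "B \<subseteq> {0<..<m}" using Bsub Asub by blast
lemma finA: "finite A" using Asub finite_subset by blast
lemma finB: "finite B" using Bsub finA finite_subset by blast

lemma Phi_mem: "x \<in> Phi m A B \<longleftrightarrow> x = 0 \<or> (m \<le> x \<and> (x < 2*m \<longrightarrow> x - m \<notin> A) \<and> (2*m \<le> x \<and> x < 3*m \<longrightarrow> x - 2*m \<notin> B))"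
proof -
  have "x \<in> (\<lambda>a. m + a) ` A \<longleftrightarrow> m \<le> x \<and> x < 2*m \<and> x - m \<in> A"
    using Asub by (auto simp: image_iff) (metis le_add_diff_inverse)
  moreover have "x \<in> (\<lambda>b. 2*m + b) ` B \<longleftrightarrow> 2*m \<le> x \<and> x < 3*m \<and> x - 2*m \<in> B"
    using Bsub' by (auto simp: image_iff) (metis le_add_diff_inverse)
  ultimately show ?thesis unfolding Phi_def by auto
qed

lemma Phi_m: "m + d \<in> Phi m A B \<longleftrightarrow> d \<notin> A" if "d < m"
  using that Phi_mem[of "m + d"] m0 by auto

lemma Phi_2m: "2*m + d \<in> Phi m A B \<longleftrightarrow> d \<notin> B" if "d < m"
  using that Phi_mem[of "2*m + d"] m0 by auto

lemma Phi_ns: "numerical_semigroup (Phi m A B)"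
  unfolding numerical_semigroup_def
proof (intro conjI ballI)
  show "0 \<in> Phi m A B" by (simp add: Phi_def)
  fix x y assume x: "x \<in> Phi m A B" and y: "y \<in> Phi m A B"
  show "x + y \<in> Phi m A B"
  proof (cases "x = 0 \<or> y = 0")
    case True then show ?thesis using x y by auto
  next
    case False
    then have xm: "m \<le> x" and ym: "m \<le> y" using x y Phi_mem by auto
    show ?thesis
    proof (cases "x + y < 3*m")
      case False then show ?thesis using Phi_mem xm ym by auto
    next
      case True
      define c where "c = x + y - 2*m"
      have c: "c < m" "x + y = 2*m + c" using True xm ym by (auto simp: c_def)
      have "c \<notin> B"
      proof
        assume cB: "c \<in> B"
        then have cA: "c \<in> A" and pr: "\<forall>d. 0 < d \<and> d < c \<longrightarrow> d \<in> A \<or> c - d \<in> A"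
          using BPA by (auto simp: PA_def)
        define d where "d = x - m"
        have d: "d \<le> c" "x = m + d" "y = m + (c - d)" using c xm ym by (auto simp: d_def)
        have dA: "d \<notin> A" using x d Phi_m[of d] c by auto
        have cdA: "c - d \<notin> A" using y d Phi_m[of "c - d"] c by auto
        have "d \<noteq> 0" proof assume "d = 0" then show False using cdA cA by simp qed
        moreover have "d \<noteq> c" using dA cA by auto
        ultimately show False using pr dA cdA d by auto
      qed
      then show ?thesis using c Phi_2m by simp
    qed
  qed
next
  have "UNIV - Phi m A B \<subseteq> {..<3*m}"
  proof
    fix x assume "x \<in> UNIV - Phi m A B"
    then have "x \<notin> Phi m A B" by simp
    then show "x \<in> {..<3*m}" using Phi_mem[of x] by (cases "x < 3*m") auto
  qed
  then show "finite (UNIV - Phi m A B)" using finite_subset by blast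
qed

lemma Phi_mult: "mult (Phi m A B) = m"
proof -
  note mp = mult_props[OF Phi_ns]
  have "m \<in> Phi m A B" using Phi_m[of 0] m0 Asub by auto
  then have "mult (Phi m A B) \<le> m" using mp(3) m0 by auto
  moreover have "m \<le> mult (Phi m A B)" using mp(1,2) Phi_mem by auto
  ultimately show ?thesis by simp
qed

lemma Phi_gaps: "gapsabove (Phi m A B) m = (\<lambda>a. m + a) ` A \<union> (\<lambda>b. 2*m + b) ` B"
  using Asub Bsub' by (auto simp: gapsabove_def Phi_def)

lemma Phi_gaps_card: "card (gapsabove (Phi m A B) m) = card A + card B"
proof -
  have "card ((\<lambda>a. m + a) ` A \<union> (\<lambda>b. 2*m + b) ` B) = card ((\<lambda>a. m + a) ` A) + card ((\<lambda>b. 2*m + b) ` B)"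
    using finA finB Asub Bsub' by (intro card_Un_disjoint) auto
  also have "\<dots> = card A + card B" by (simp add: card_image)
  finally show ?thesis using Phi_gaps by simp
qed

lemma Phi_genus: "genus (Phi m A B) = (m - 1) + card A + card B"
  using genus_split(1)[OF Phi_ns] Phi_mult Phi_gaps_card by simp

lemma Phi_Aof: "Aof (Phi m A B) = A"
  using Asub Phi_m by (auto simp: Aof_def Phi_mult)

lemma Phi_Bof: "Bof (Phi m A B) = B"
  using Bsub' Phi_2m by (auto simp: Bof_def Phi_mult)

lemma Phi_MG:
  assumes small: "2 * (card A + card B) < m"
  shows "MG (Phi m A B) = (Phi m A B \<inter> {m..<2*m}) \<union> (\<lambda>a. 2*m + a) ` (PA A - B)"
proof -
  let ?T = "Phi m A B"
  have sumform: "x \<in> {a + b |a b. a \<in> ?T - {0} \<and> b \<in> ?T - {0}} \<longleftrightarrow>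
      (\<exists>u. m \<le> u \<and> u \<in> ?T \<and> x - u \<in> ?T \<and> m \<le> x - u \<and> u \<le> x)" for x
  proof
    assume "x \<in> {a + b |a b. a \<in> ?T - {0} \<and> b \<in> ?T - {0}}"
    then obtain a b where ab: "x = a + b" "a \<in> ?T" "b \<in> ?T" "a \<noteq> 0" "b \<noteq> 0" by blast
    then have "m \<le> a" "m \<le> b" using Phi_mem by auto
    then show "\<exists>u. m \<le> u \<and> u \<in> ?T \<and> x - u \<in> ?T \<and> m \<le> x - u \<and> u \<le> x"
      using ab by (intro exI[of _ a]) auto
  next
    assume "\<exists>u. m \<le> u \<and> u \<in> ?T \<and> x - u \<in> ?T \<and> m \<le> x - u \<and> u \<le> x"
    then obtain u where u: "m \<le> u" "u \<in> ?T" "x - u \<in> ?T" "m \<le> x - u" "u \<le> x" by blast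
    then have e: "x = u + (x - u)" and nz: "u \<in> ?T - {0}" "x - u \<in> ?T - {0}" using m0 by auto
    show "x \<in> {a + b |a b. a \<in> ?T - {0} \<and> b \<in> ?T - {0}}"
      apply (rule CollectI, rule exI[of _ u], rule exI[of _ "x - u"])
      apply (intro conjI)
        apply (rule e)
       apply (rule nz(1))
      by (rule nz(2))
  qed
  have mem: "x \<in> MG ?T \<longleftrightarrow> x \<in> ?T \<and> x \<noteq> 0 \<and>
      \<not> (\<exists>u. m \<le> u \<and> u \<in> ?T \<and> x - u \<in> ?T \<and> m \<le> x - u \<and> u \<le> x)" for x
    unfolding MG_def Diff_iff[of x] singleton_iff[of x] sumform[of x] by blast
  show ?thesis
  proof (rule set_eqI)
    fix x
    show "x \<in> MG ?T \<longleftrightarrow> x \<in> (?T \<inter> {m..<2*m}) \<union> (\<lambda>a. 2*m + a) ` (PA A - B)"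
    proof
      assume x: "x \<in> MG ?T"
      then have xT: "x \<in> ?T" "x \<noteq> 0" and ns: "\<not> (\<exists>u. m \<le> u \<and> u \<in> ?T \<and> x - u \<in> ?T \<and> m \<le> x - u \<and> u \<le> x)"
        using mem by auto
      then have xm: "m \<le> x" using Phi_mem by auto
      have "x < 3*m"
      proof (rule ccontr)
        assume "\<not> x < 3*m"
        then have "3*m \<le> x" by simp
        moreover have "m \<in> ?T" using Phi_m[of 0] m0 Asub by auto
        moreover have "finite (gapsabove ?T m)" using Phi_gaps finA finB by simp
        moreover have "2 * card (gapsabove ?T m) < m" using Phi_gaps_card small by simp
        ultimately show False using pairs[of m ?T x] m0 ns by blast
      qed
      show "x \<in> (?T \<inter> {m..<2*m}) \<union> (\<lambda>a. 2*m + a) ` (PA A - B)"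
      proof (cases "x < 2*m")
        case True then show ?thesis using xT xm by auto
      next
        case False
        define c where "c = x - 2*m"
        have c: "c < m" "x = 2*m + c" using False \<open>x < 3*m\<close> by (auto simp: c_def)
        have cB: "c \<notin> B" using Phi_2m c xT by auto
        have cA: "c \<in> A"
        proof (rule ccontr)
          assume "c \<notin> A"
          then have "m + c \<in> ?T" using Phi_m c by auto
          moreover have "m \<in> ?T" using Phi_m[of 0] m0 Asub by auto
          moreover have "x - m = m + c" using c by simp
          ultimately have "m \<le> m \<and> m \<in> ?T \<and> x - m \<in> ?T \<and> m \<le> x - m \<and> m \<le> x" using c by simp
          then show False using ns by blast
        qed
        have cP: "c \<in> PA A"
        proof (rule ccontr)
          assume "c \<notin> PA A"
          then obtain d where d: "0 < d" "d < c" "d \<notin> A" "c - d \<notin> A" using cA by (auto simp: PA_def)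
          have "m + d \<in> ?T" using Phi_m[of d] d c by simp
          moreover have "m + (c - d) \<in> ?T" using Phi_m[of "c - d"] d c by simp
          moreover have "x - (m + d) = m + (c - d)" using c d by auto
          ultimately have "m \<le> m + d \<and> m + d \<in> ?T \<and> x - (m + d) \<in> ?T \<and> m \<le> x - (m + d) \<and> m + d \<le> x" using c d by simp
          then show False using ns by blast
        qed
        show ?thesis using c cB cP by auto
      qed
    next
      assume x: "x \<in> (?T \<inter> {m..<2*m}) \<union> (\<lambda>a. 2*m + a) ` (PA A - B)"
      show "x \<in> MG ?T"
      proof (cases "x < 2*m")
        case True
        then have "x \<in> ?T" "m \<le> x" using x by auto
        then show ?thesis using mem[of x] True m0 by auto
      next
        case False
        then obtain c where c: "x = 2*m + c" "c \<in> PA A" "c \<notin> B" using x by auto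
        have cA: "c \<in> A" and pr: "\<forall>d. 0 < d \<and> d < c \<longrightarrow> d \<in> A \<or> c - d \<in> A"
          using c(2) by (auto simp: PA_def)
        have cm: "c < m" using cA Asub by auto
        have xT: "x \<in> ?T" using Phi_2m[of c] c cm by simp
        have "\<not> (\<exists>u. m \<le> u \<and> u \<in> ?T \<and> x - u \<in> ?T \<and> m \<le> x - u \<and> u \<le> x)"
        proof
          assume "\<exists>u. m \<le> u \<and> u \<in> ?T \<and> x - u \<in> ?T \<and> m \<le> x - u \<and> u \<le> x"
          then obtain u where u: "m \<le> u" "u \<in> ?T" "x - u \<in> ?T" "m \<le> x - u" "u \<le> x" by blast
          define d where "d = u - m"
          have d: "d \<le> c" "u = m + d" "x - u = m + (c - d)" using u c by (auto simp: d_def)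
          have dA: "d \<notin> A" using u(2) d Phi_m[of d] cm by auto
          have cdA: "c - d \<notin> A" using u(3) d Phi_m[of "c - d"] cm by auto
          have "d \<noteq> 0" proof assume "d = 0" then show False using cdA cA by simp qed
          moreover have "d \<noteq> c" using dA cA by auto
          ultimately show False using pr dA cdA d by auto
        qed
        then show ?thesis using mem[of x] xT m0 c by auto
      qed
    qed
  qed
qed

lemma Phi_ed:
  assumes small: "2 * (card A + card B) < m"
  shows "int (embedding_dimension (Phi m A B)) = int m - int (card A) + int (card (PA A)) - int (card B)"
proof -
  let ?T = "Phi m A B"
  have e1: "?T \<inter> {m..<2*m} = {m..<2*m} - (\<lambda>a. m + a) ` A"
    using Phi_mem Phi_m Asub by (auto simp: image_iff) (metis le_add_diff_inverse)+
  have c1: "card (?T \<inter> {m..<2*m}) = m - card A"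
  proof -
    have "(\<lambda>a. m + a) ` A \<subseteq> {m..<2*m}" using Asub by auto
    then have "card ({m..<2*m} - (\<lambda>a. m + a) ` A) = card {m..<2*m} - card ((\<lambda>a. m + a) ` A)"
      using finA by (intro card_Diff_subset) auto
    then show ?thesis using e1 by (simp add: card_image)
  qed
  have c2: "card ((\<lambda>a. 2*m + a) ` (PA A - B)) = card (PA A) - card B"
    using BPA finB by (simp add: card_image card_Diff_subset)
  have disj: "(?T \<inter> {m..<2*m}) \<inter> (\<lambda>a. 2*m + a) ` (PA A - B) = {}" by auto
  have fin2: "finite ((\<lambda>a. 2*m + a) ` (PA A - B))" using finA PA_sub
    by (meson finite_Diff finite_imageI finite_subset)
  have "embedding_dimension ?T = (m - card A) + (card (PA A) - card B)"
    unfolding ed_MG Phi_MG[OF small] using c1 c2 disj fin2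
    by (subst card_Un_disjoint) auto
  moreover have "card A \<le> m" using Asub by (metis card_greaterThanLessThan card_mono finite_greaterThanLessThan le_diff_conv le_add2 order_trans diff_le_self)
  moreover have "card B \<le> card (PA A)" using BPA finA PA_sub by (meson card_mono finite_subset)
  ultimately show ?thesis by simp
qed

end

lemma S_is_Phi:
  assumes ns: "numerical_semigroup S"
    and small: "2 * card (gapsabove S (mult S)) < mult S"
  shows "S = Phi (mult S) (Aof S) (Bof S)" "Aof S \<subseteq> {0<..<mult S}" "Bof S \<subseteq> PA (Aof S)"
proof -
  let ?m = "mult S"
  note mp = mult_props[OF ns]
  show As: "Aof S \<subseteq> {0<..<mult S}" by (auto simp: Aof_def)
  show BP: "Bof S \<subseteq> PA (Aof S)"
  proof
    fix b assume b: "b \<in> Bof S"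
    then have b1: "0 < b" "b < ?m" "2 * ?m + b \<notin> S" by (auto simp: Bof_def)
    have "?m + b \<notin> S"
    proof
      assume "?m + b \<in> S"
      then have "?m + (?m + b) \<in> S" using ns_add[OF ns mp(1)] by blast
      moreover have "?m + (?m + b) = 2 * ?m + b" by simp
      ultimately have "2 * ?m + b \<in> S" by (simp only:)
      then show False using b1 by blast
    qed
    then have bA: "b \<in> Aof S" using b1 by (auto simp: Aof_def)
    have "c \<in> Aof S \<or> b - c \<in> Aof S" if c: "0 < c" "c < b" for c
    proof (rule ccontr)
      assume "\<not> ?thesis"
      then have "?m + c \<in> S" "?m + (b - c) \<in> S" using c b1 by (auto simp: Aof_def)
      then have "(?m + c) + (?m + (b - c)) \<in> S" using ns_add[OF ns] by blast
      moreover have "(?m + c) + (?m + (b - c)) = 2 * ?m + b" using c by simp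
      ultimately have "2 * ?m + b \<in> S" by (simp only:)
      then show False using b1 by blast
    qed
    then show "b \<in> PA (Aof S)" using bA by (auto simp: PA_def)
  qed
  have B3: "Bof S \<subseteq> PA (Aof S)" using BP .
  show "S = Phi ?m (Aof S) (Bof S)"
  proof (rule set_eqI)
    fix x
    have pm: "x \<in> Phi ?m (Aof S) (Bof S) \<longleftrightarrow> x = 0 \<or> (?m \<le> x \<and> (x < 2*?m \<longrightarrow> x - ?m \<notin> Aof S) \<and> (2*?m \<le> x \<and> x < 3*?m \<longrightarrow> x - 2*?m \<notin> Bof S))"
      using Phi_mem[OF mp(2) As B3] .
    show "x \<in> S \<longleftrightarrow> x \<in> Phi ?m (Aof S) (Bof S)"
    proof
      assume xS: "x \<in> S"
      show "x \<in> Phi ?m (Aof S) (Bof S)"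
      proof (cases "x = 0")
        case True then show ?thesis using pm by simp
      next
        case False
        then have "?m \<le> x" using mp(3) xS by auto
        then show ?thesis using pm xS by (auto simp: Aof_def Bof_def)
      qed
    next
      assume xP: "x \<in> Phi ?m (Aof S) (Bof S)"
      show "x \<in> S"
      proof (cases "x = 0")
        case True then show ?thesis using ns_zero[OF ns] by simp
      next
        case False
        then have xm: "?m \<le> x" and c1: "x < 2*?m \<longrightarrow> x - ?m \<notin> Aof S"
          and c2: "2*?m \<le> x \<and> x < 3*?m \<longrightarrow> x - 2*?m \<notin> Bof S" using pm xP by auto
        show ?thesis
        proof (cases "x < 2*?m")
          case True
          show ?thesis
          proof (cases "x = ?m")
            case True then show ?thesis using mp(1) by simp
          next
            case False
            then have "0 < x - ?m" "x - ?m < ?m" using xm \<open>x < 2*?m\<close> by auto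
            then have "?m + (x - ?m) \<in> S" using c1 \<open>x < 2*?m\<close> by (auto simp: Aof_def)
            then show ?thesis using xm by simp
          qed
        next
          case F2: False
          show ?thesis
          proof (cases "x < 3*?m")
            case True
            show ?thesis
            proof (cases "x = 2*?m")
              case True then show ?thesis using ns_mult_in[OF ns mp(1), of 2] by (simp add: mult.commute)
            next
              case False
              then have "0 < x - 2*?m" "x - 2*?m < ?m" using F2 \<open>x < 3*?m\<close> by auto
              then have "2*?m + (x - 2*?m) \<in> S" using c2 F2 True by (auto simp: Bof_def)
              then show ?thesis using F2 by simp
            qed
          next
            case False
            then have "3 * ?m \<le> x" by simp
            then obtain u where u: "u \<in> S" "x - u \<in> S" "u \<le> x"
              using pairs[OF mp(2) mp(1) genus_split(2)[OF ns] small] by blast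
            then have "u + (x - u) \<in> S" using ns_add[OF ns] by blast
            then show ?thesis using u by simp
          qed
        qed
      qed
    qed
  qed
qed


definition W :: "nat set \<Rightarrow> nat set \<Rightarrow> nat" where
  "W A B = card (PA A) + 2 * card (A - PA A) + 2 * card B"

lemma card_le_W:
  assumes "finite A" "B \<subseteq> PA A"
  shows "card A + card B \<le> W A B"
proof -
  have "card A = card (PA A) + card (A - PA A)"
    using assms(1) PA_sub by (metis card_Diff_subset card_mono finite_subset le_add_diff_inverse)
  then show ?thesis unfolding W_def by simp
qed

lemma W_eq_int:
  assumes "finite A"
  shows "int (W A B) = 2 * int (card A) - int (card (PA A)) + 2 * int (card B)"
proof -
  have "card (A - PA A) = card A - card (PA A)" using assms PA_sub by (meson card_Diff_subset finite_subset)
  moreover have "card (PA A) \<le> card A" using assms PA_sub by (meson card_mono)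
  ultimately show ?thesis unfolding W_def by simp
qed

definition Trip :: "nat \<Rightarrow> int \<Rightarrow> (nat set \<times> nat set) set" where
  "Trip g k = {(A,B). A \<subseteq> {0<..<g + 1 - card A - card B} \<and> B \<subseteq> PA A \<and> int (W A B) = k + 1}"

definition PhiT :: "nat \<Rightarrow> nat set \<times> nat set \<Rightarrow> nat set" where
  "PhiT g p = Phi (g + 1 - card (fst p) - card (snd p)) (fst p) (snd p)"

context
  fixes g :: nat and k :: int
  assumes k: "-1 \<le> k" and gk: "9*k + 7 \<le> 2 * int g"
begin

lemma forward:
  assumes S: "S \<in> semigroups_of_genus g" and e: "int (embedding_dimension S) = int g - k"
  shows "(Aof S, Bof S) \<in> Trip g k \<and> S = PhiT g (Aof S, Bof S)"
proof -
  have ns: "numerical_semigroup S" and gen: "genus S = g" using S by (auto simp: semigroups_of_genus_def)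
  let ?m = "mult S"
  let ?j = "card (gapsabove S ?m)"
  note mp = mult_props[OF ns]
  have g1: "g = (?m - 1) + ?j" using genus_split(1)[OF ns] gen by simp
  have em: "embedding_dimension S \<le> ?m" using e_le_m[OF ns] ed_MG by simp
  have small: "2 * ?j < ?m"
  proof -
    have "int ?j \<le> k + 1" using g1 em e mp(2) by linarith
    moreover have "int ?m \<ge> int g - k" using em e by linarith
    ultimately show ?thesis using gk k mp(2) by linarith
  qed
  note SP = S_is_Phi[OF ns small]
  let ?A = "Aof S" and ?B = "Bof S"
  have Asub: "?A \<subseteq> {0<..<?m}" and BPA: "?B \<subseteq> PA ?A" using SP by auto
  have finA: "finite ?A" using Asub finite_subset by blast
  have jAB: "?j = card ?A + card ?B"
    using Phi_gaps_card[OF mp(2) Asub BPA] SP(1) by metis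
  have gAB: "g = ?m - 1 + card ?A + card ?B" using g1 jAB by simp
  have mAB: "?m = g + 1 - card ?A - card ?B" using gAB mp(2) by simp
  have small2: "2 * (card ?A + card ?B) < ?m" using small jAB by simp
  have ed: "int (embedding_dimension S) = int ?m - int (card ?A) + int (card (PA ?A)) - int (card ?B)"
    using Phi_ed[OF mp(2) Asub BPA small2] SP(1) by metis
  have "int (W ?A ?B) = k + 1" using W_eq_int[OF finA, of ?B] ed e gAB mp(2) by linarith
  then have "(?A, ?B) \<in> Trip g k" using Asub BPA mAB by (simp add: Trip_def)
  moreover have "S = PhiT g (?A, ?B)" using SP(1) mAB by (simp add: PhiT_def)
  ultimately show ?thesis by simp
qed

lemma backward:
  assumes p: "p \<in> Trip g k"
  shows "PhiT g p \<in> semigroups_of_genus g \<and> int (embedding_dimension (PhiT g p)) = int g - k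
     \<and> Aof (PhiT g p) = fst p \<and> Bof (PhiT g p) = snd p"
proof -
  obtain A B where pAB: "p = (A, B)" by (cases p)
  let ?M = "g + 1 - card A - card B"
  have Asub: "A \<subseteq> {0<..<?M}" and BPA: "B \<subseteq> PA A" and w: "int (W A B) = k + 1"
    using p pAB by (auto simp: Trip_def)
  have finA: "finite A" using Asub finite_subset by blast
  have le: "card A + card B \<le> W A B" using card_le_W[OF finA BPA] .
  have h: "int (card A) + int (card B) \<le> k + 1" using le w by linarith
  have "3 * card A + 3 * card B < g + 1"
  proof (cases "k = -1")
    case True then show ?thesis using h by simp
  next
    case False then have "0 \<le> k" using k by simp
    then show ?thesis using h gk by linarith
  qed
  then have small: "2 * (card A + card B) < ?M" by (simp add: algebra_simps)
  have M0: "0 < ?M" using small by simp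
  have gen: "genus (Phi ?M A B) = g" using Phi_genus[OF M0 Asub BPA] small by simp
  have ed: "int (embedding_dimension (Phi ?M A B)) = int ?M - int (card A) + int (card (PA A)) - int (card B)"
    using Phi_ed[OF M0 Asub BPA small] .
  have "int (embedding_dimension (Phi ?M A B)) = int g - k"
    using ed W_eq_int[OF finA, of B] w small by linarith
  then show ?thesis
    using gen Phi_ns[OF M0 Asub BPA] Phi_Aof[OF M0 Asub BPA] Phi_Bof[OF M0 Asub BPA] pAB
    by (simp add: PhiT_def semigroups_of_genus_def)
qed

lemma count_Trip:
  "card {S \<in> semigroups_of_genus g. int (embedding_dimension S) = int g - k} = card (Trip g k)"
proof -
  have eq: "{S \<in> semigroups_of_genus g. int (embedding_dimension S) = int g - k} = PhiT g ` Trip g k"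
  proof
    show "{S \<in> semigroups_of_genus g. int (embedding_dimension S) = int g - k} \<subseteq> PhiT g ` Trip g k"
      using forward by blast
    show "PhiT g ` Trip g k \<subseteq> {S \<in> semigroups_of_genus g. int (embedding_dimension S) = int g - k}"
      using backward by blast
  qed
  have inj: "inj_on (PhiT g) (Trip g k)"
  proof (rule inj_onI)
    fix p q assume p: "p \<in> Trip g k" and q: "q \<in> Trip g k" and e: "PhiT g p = PhiT g q"
    have "fst p = fst q" using backward[OF p] backward[OF q] e by metis
    moreover have "snd p = snd q" using backward[OF p] backward[OF q] e by metis
    ultimately show "p = q" by (simp add: prod_eq_iff)
  qed
  show ?thesis using eq card_image[OF inj] by simp
qed

end


lemma PA_bound:
  assumes fin: "finite A" and a: "a \<in> PA A"
  shows "a < 2 * card A"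
proof -
  have aA: "a \<in> A" and pr: "\<And>c. 0 < c \<Longrightarrow> c < a \<Longrightarrow> c \<in> A \<or> a - c \<in> A"
    using a by (auto simp: PA_def)
  define C where "C = {1..a div 2}"
  define f where "f c = (if c \<in> A then c else a - c)" for c
  have cC: "0 < c \<and> 2 * c \<le> a" if "c \<in> C" for c
  proof -
    have "1 \<le> c" "c \<le> a div 2" using that by (auto simp: C_def)
    then show ?thesis by presburger
  qed
  have img: "f ` C \<subseteq> A - {a}"
  proof
    fix y assume "y \<in> f ` C"
    then obtain c where c: "c \<in> C" "y = f c" by auto
    have c1: "0 < c" "2 * c \<le> a" using cC[OF c(1)] by auto
    then have ca: "c < a" by simp
    show "y \<in> A - {a}"
    proof (cases "c \<in> A")
      case True then show ?thesis using c ca by (simp add: f_def)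
    next
      case False
      then have "a - c \<in> A" using pr c1 ca by blast
      moreover have "a - c \<noteq> a" using c1 ca by simp
      ultimately show ?thesis using c False by (simp add: f_def)
    qed
  qed
  have inj: "inj_on f C"
  proof (rule inj_onI)
    fix c c' assume c: "c \<in> C" and c': "c' \<in> C" and e: "f c = f c'"
    have h: "0 < c" "2 * c \<le> a" "0 < c'" "2 * c' \<le> a" using cC c c' by auto
    show "c = c'"
    proof (cases "c \<in> A"; cases "c' \<in> A")
      assume "c \<in> A" "c' \<in> A" then show ?thesis using e by (simp add: f_def)
    next
      assume "c \<in> A" "c' \<notin> A"
      then have "c = a - c'" using e by (simp add: f_def)
      then have "c = c'" using h by simp
      then show ?thesis .
    next
      assume "c \<notin> A" "c' \<in> A"
      then have "a - c = c'" using e by (simp add: f_def)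
      then show ?thesis using h by simp
    next
      assume "c \<notin> A" "c' \<notin> A"
      then have "a - c = a - c'" using e by (simp add: f_def)
      then show ?thesis using h by simp
    qed
  qed
  have "card C \<le> card (A - {a})"
    using card_image[OF inj] card_mono[OF _ img] fin by (metis finite_Diff)
  then have "a div 2 \<le> card A - 1" using aA fin by (simp add: C_def)
  moreover have "card A \<ge> 1" using aA fin by (metis One_nat_def Suc_leI card_gt_0_iff empty_iff)
  ultimately show ?thesis by presburger
qed

lemma PA_split:
  assumes fin: "finite A" and bnd: "2 * card A \<le> L + 1"
  shows "PA A = PA (A \<inter> {..L})"
proof (rule set_eqI)
  fix a
  show "a \<in> PA A \<longleftrightarrow> a \<in> PA (A \<inter> {..L})"
  proof
    assume a: "a \<in> PA A"
    then have aL: "a \<le> L" using PA_bound[OF fin a] bnd by simp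
    have aA: "a \<in> A" and pr: "\<And>c. 0 < c \<Longrightarrow> c < a \<Longrightarrow> c \<in> A \<or> a - c \<in> A"
      using a by (auto simp: PA_def)
    have "c \<in> A \<inter> {..L} \<or> a - c \<in> A \<inter> {..L}" if "0 < c" "c < a" for c
      using pr[OF that] that aL by auto
    then show "a \<in> PA (A \<inter> {..L})" using aA aL by (auto simp: PA_def)
  next
    assume "a \<in> PA (A \<inter> {..L})"
    then show "a \<in> PA A" by (auto simp: PA_def)
  qed
qed

lemma W_split:
  assumes As: "As \<subseteq> {..L}" and Al: "Al \<subseteq> {L<..}" and finAs: "finite As" and finAl: "finite Al"
    and bnd: "2 * card (As \<union> Al) \<le> L + 1"
  shows "PA (As \<union> Al) = PA As" "W (As \<union> Al) B = W As B + 2 * card Al"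
proof -
  have i: "(As \<union> Al) \<inter> {..L} = As" using As Al by auto
  show P: "PA (As \<union> Al) = PA As" using PA_split[OF _ bnd] finAs finAl i by simp
  have d0: "PA As \<inter> Al = {}"
  proof (rule equals0I)
    fix x assume "x \<in> PA As \<inter> Al"
    then have "x \<in> {..L}" "x \<in> {L<..}" using As Al PA_sub[of As] by blast+
    then show False by simp
  qed
  have d: "(As \<union> Al) - PA As = (As - PA As) \<union> Al" using d0 by blast
  have d1: "(As - PA As) \<inter> Al = {}"
  proof (rule equals0I)
    fix x assume "x \<in> (As - PA As) \<inter> Al"
    then have "x \<in> {..L}" "x \<in> {L<..}" using As Al by blast+
    then show False by simp
  qed
  have "card ((As - PA As) \<union> Al) = card (As - PA As) + card Al"
    by (rule card_Un_disjoint) (use finAs finAl d1 in auto)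
  then show "W (As \<union> Al) B = W As B + 2 * card Al"
    unfolding W_def P d by simp
qed

definition Lc :: "int \<Rightarrow> nat" where "Lc k = nat (2*k+1)"

definition Pat :: "int \<Rightarrow> (nat set \<times> nat set) set" where
  "Pat k = {(As,B). As \<subseteq> {0<..Lc k} \<and> B \<subseteq> PA As \<and> int (W As B) \<le> k + 1 \<and> even (k + 1 - int (W As B))}"

definition rr :: "int \<Rightarrow> nat set \<times> nat set \<Rightarrow> nat" where
  "rr k p = nat ((k + 1 - int (W (fst p) (snd p))) div 2)"

definition nn :: "nat \<Rightarrow> int \<Rightarrow> nat set \<times> nat set \<Rightarrow> nat" where
  "nn g k p = g - card (fst p) - rr k p - card (snd p)"

definition Fam :: "nat \<Rightarrow> int \<Rightarrow> nat set \<times> nat set \<Rightarrow> nat set set" where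
  "Fam g k p = {Al. Al \<subseteq> {Lc k<..nn g k p} \<and> card Al = rr k p}"

definition Psi :: "(nat set \<times> nat set) \<times> nat set \<Rightarrow> nat set \<times> nat set" where
  "Psi q = (fst (fst q) \<union> snd q, snd (fst q))"

lemma Pat_fin: "finite (Pat k)"
proof -
  have "Pat k \<subseteq> Pow {0<..Lc k} \<times> Pow {0<..Lc k}"
    using PA_sub by (fastforce simp: Pat_def)
  then show ?thesis by (rule finite_subset) simp
qed

lemma Pat_facts:
  assumes p: "p \<in> Pat k"
  shows "finite (fst p)" "fst p \<subseteq> {0<..Lc k}" "snd p \<subseteq> PA (fst p)"
    "int (W (fst p) (snd p)) + 2 * int (rr k p) = k + 1"
    "int (card (fst p)) + int (card (snd p)) + int (rr k p) \<le> k + 1"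
proof -
  obtain As B where pe: "p = (As, B)" by (cases p)
  have As: "As \<subseteq> {0<..Lc k}" and BP: "B \<subseteq> PA As" and w: "int (W As B) \<le> k + 1"
    and ev: "even (k + 1 - int (W As B))" using p pe by (auto simp: Pat_def)
  show "finite (fst p)" using As pe finite_subset by auto
  then have finAs: "finite As" using pe by simp
  show "fst p \<subseteq> {0<..Lc k}" "snd p \<subseteq> PA (fst p)" using As BP pe by auto
  have r: "int (rr k p) = (k + 1 - int (W As B)) div 2" using w pe by (simp add: rr_def)
  show r2: "int (W (fst p) (snd p)) + 2 * int (rr k p) = k + 1" using r ev pe by auto
  have "card As + card B \<le> W As B" using card_le_W[OF finAs BP] .
  then show "int (card (fst p)) + int (card (snd p)) + int (rr k p) \<le> k + 1" using r2 pe by simp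
qed

context
  fixes g :: nat and k :: int
  assumes k: "-1 \<le> k" and gk: "9*k + 7 \<le> 2 * int g"
begin

lemma L_facts: "2 * k + 2 \<le> int (Lc k) + 1" "int (Lc k) + k + 1 \<le> int g"
proof -
  show "2 * k + 2 \<le> int (Lc k) + 1" using k by (simp add: Lc_def)
  show "int (Lc k) + k + 1 \<le> int g"
  proof (cases "k = -1")
    case True then show ?thesis by (simp add: Lc_def)
  next
    case False then have "0 \<le> k" using k by simp
    then show ?thesis using gk by (simp add: Lc_def)
  qed
qed

lemma Psi_in:
  assumes p: "p \<in> Pat k" and Al: "Al \<in> Fam g k p"
  shows "Psi (p, Al) \<in> Trip g k"
proof -
  obtain As B where pe: "p = (As, B)" by (cases p)
  let ?L = "Lc k"
  let ?r = "rr k p"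
  note pf = Pat_facts[OF p]
  have finAs: "finite As" and As: "As \<subseteq> {0<..?L}" and BP: "B \<subseteq> PA As"
    using pf pe by auto
  have w: "int (W As B) + 2 * int ?r = k + 1" and sm: "int (card As) + int (card B) + int ?r \<le> k + 1"
    using pf pe by auto
  have Alsub: "Al \<subseteq> {?L<..nn g k p}" and cAl: "card Al = ?r" using Al by (auto simp: Fam_def)
  have finAl: "finite Al" using Alsub finite_subset by blast
  have disj: "As \<inter> Al = {}"
  proof (rule equals0I)
    fix x assume "x \<in> As \<inter> Al"
    then have "x \<in> {0<..?L}" "x \<in> {?L<..nn g k p}" using As Alsub by blast+
    then show False by simp
  qed
  have cA: "card (As \<union> Al) = card As + ?r" using card_Un_disjoint[OF finAs finAl disj] cAl by simp
  have bnd: "2 * card (As \<union> Al) \<le> ?L + 1" using cA sm L_facts(1) by linarith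
  have As': "As \<subseteq> {..?L}" and Al': "Al \<subseteq> {?L<..}" using As Alsub by auto
  note ws = W_split[OF As' Al' finAs finAl bnd]
  have W: "int (W (As \<union> Al) B) = k + 1" using ws(2)[of B] w cAl by simp
  have BP': "B \<subseteq> PA (As \<union> Al)" using ws(1) BP by simp
  have nnv: "nn g k p = g - card As - ?r - card B" using pe by (simp add: nn_def)
  have "int ?L + int (card As) + int (card B) + int ?r \<le> int g" using sm L_facts(2) by linarith
  then have LM: "?L \<le> nn g k p" using nnv by linarith
  have M: "g + 1 - card (As \<union> Al) - card B = nn g k p + 1" using nnv cA \<open>int ?L + int (card As) + int (card B) + int ?r \<le> int g\<close> by linarith
  have "As \<union> Al \<subseteq> {0<..<g + 1 - card (As \<union> Al) - card B}"
    using As Alsub LM M by auto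
  then show ?thesis using W BP' pe by (simp add: Psi_def Trip_def)
qed

lemma Psi_onto:
  assumes q: "q \<in> Trip g k"
  shows "q \<in> Psi ` Sigma (Pat k) (Fam g k)"
proof -
  obtain A B where qe: "q = (A, B)" by (cases q)
  let ?L = "Lc k"
  let ?M = "g + 1 - card A - card B"
  have Asub: "A \<subseteq> {0<..<?M}" and BPA: "B \<subseteq> PA A" and w: "int (W A B) = k + 1"
    using q qe by (auto simp: Trip_def)
  have finA: "finite A" using Asub finite_subset by blast
  define As where "As = A \<inter> {..?L}"
  define Al where "Al = A \<inter> {?L<..}"
  have AU: "A = As \<union> Al" by (auto simp: As_def Al_def)
  have finAs: "finite As" and finAl: "finite Al" using finA by (auto simp: As_def Al_def)
  have le: "card A + card B \<le> W A B" using card_le_W[OF finA BPA] .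
  have "2 * card A \<le> ?L + 1" using le w L_facts(1) by linarith
  then have bnd: "2 * card (As \<union> Al) \<le> ?L + 1" using AU by simp
  have As': "As \<subseteq> {..?L}" and Al': "Al \<subseteq> {?L<..}" by (auto simp: As_def Al_def)
  note ws = W_split[OF As' Al' finAs finAl bnd]
  have PAe: "PA A = PA As" using ws(1) AU by simp
  have We: "W A B = W As B + 2 * card Al" using ws(2)[of B] AU by simp
  have disj: "As \<inter> Al = {}" by (auto simp: As_def Al_def)
  have cA: "card A = card As + card Al" using card_Un_disjoint[OF finAs finAl disj] AU by simp
  have pP: "(As, B) \<in> Pat k"
  proof -
    have "As \<subseteq> {0<..?L}" using Asub by (auto simp: As_def)
    moreover have "B \<subseteq> PA As" using BPA PAe by simp
    moreover have "int (W As B) \<le> k + 1" using We w by linarith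
    moreover have "k + 1 - int (W As B) = 2 * int (card Al)" using We w by linarith
    then have "even (k + 1 - int (W As B))" by simp
    ultimately show ?thesis by (simp add: Pat_def)
  qed
  have r: "rr k (As, B) = card Al" using We w by (simp add: rr_def)
  have "Al \<subseteq> {?L<..nn g k (As, B)}"
  proof
    fix x assume x: "x \<in> Al"
    then have "x \<in> A" "?L < x" by (auto simp: Al_def)
    then have "x < ?M" using Asub by auto
    then show "x \<in> {?L<..nn g k (As, B)}" using r cA \<open>?L < x\<close> by (simp add: nn_def)
  qed
  then have "Al \<in> Fam g k (As, B)" using r by (simp add: Fam_def)
  moreover have "q = Psi ((As, B), Al)" using AU qe by (simp add: Psi_def)
  ultimately show ?thesis using pP by blast
qed

lemma Psi_inj: "inj_on Psi (Sigma (Pat k) (Fam g k))"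
proof (rule inj_onI)
  fix x y assume x: "x \<in> Sigma (Pat k) (Fam g k)" and y: "y \<in> Sigma (Pat k) (Fam g k)"
    and e: "Psi x = Psi y"
  obtain p Al where xe: "x = (p, Al)" by (cases x)
  obtain p' Al' where ye: "y = (p', Al')" by (cases y)
  have p: "p \<in> Pat k" "Al \<in> Fam g k p" using x xe by auto
  have p': "p' \<in> Pat k" "Al' \<in> Fam g k p'" using y ye by auto
  have s1: "fst p \<subseteq> {..Lc k}" "Al \<subseteq> {Lc k<..}" using Pat_facts(2)[OF p(1)] p(2) by (auto simp: Fam_def)
  have s2: "fst p' \<subseteq> {..Lc k}" "Al' \<subseteq> {Lc k<..}" using Pat_facts(2)[OF p'(1)] p'(2) by (auto simp: Fam_def)
  have u: "fst p \<union> Al = fst p' \<union> Al'" and sn: "snd p = snd p'" using e xe ye by (auto simp: Psi_def)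
  have "fst p = (fst p \<union> Al) \<inter> {..Lc k}" using s1 by auto
  also have "\<dots> = (fst p' \<union> Al') \<inter> {..Lc k}" using u by simp
  also have "\<dots> = fst p'" using s2 by auto
  finally have f: "fst p = fst p'" .
  have "Al = (fst p \<union> Al) \<inter> {Lc k<..}" using s1 by auto
  also have "\<dots> = (fst p' \<union> Al') \<inter> {Lc k<..}" using u by simp
  also have "\<dots> = Al'" using s2 by auto
  finally have "Al = Al'" .
  then show "x = y" using f sn xe ye by (simp add: prod_eq_iff)
qed

lemma card_Trip: "card (Trip g k) = (\<Sum>p\<in>Pat k. (nn g k p - Lc k) choose rr k p)"
proof -
  have eq: "Trip g k = Psi ` Sigma (Pat k) (Fam g k)"
    using Psi_onto Psi_in by blast
  have fam: "card (Fam g k p) = (nn g k p - Lc k) choose rr k p" for p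
    using n_subsets[of "{Lc k<..nn g k p}" "rr k p"] by (simp add: Fam_def)
  have finF: "\<forall>p\<in>Pat k. finite (Fam g k p)"
    by (auto simp: Fam_def intro: finite_subset[of _ "Pow {Lc k<..nn g k _}"])
  have "card (Trip g k) = card (Sigma (Pat k) (Fam g k))"
    using eq card_image[OF Psi_inj] by simp
  also have "\<dots> = (\<Sum>p\<in>Pat k. card (Fam g k p))"
    using Pat_fin finF by simp
  finally show ?thesis using fam by simp
qed

end


definition ff :: "nat \<Rightarrow> nat \<Rightarrow> int poly" where
  "ff c r = (\<Prod>i<r. [:- int (c + i), 1:])"

lemma ff_props: "degree (ff c r) = r \<and> coeff (ff c r) r = 1"
proof (induction r)
  case 0 then show ?case by (simp add: ff_def)
next
  case (Suc r)
  have e: "ff c (Suc r) = ff c r * [:- int (c + r), 1:]" by (simp add: ff_def)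
  have ne: "ff c r \<noteq> 0" using Suc by auto
  have d: "degree (ff c (Suc r)) = Suc r" unfolding e using Suc ne
    by (simp add: degree_mult_eq del: mult_pCons_right)
  have "lead_coeff (ff c (Suc r)) = lead_coeff (ff c r) * lead_coeff [:- int (c + r), 1:]"
    unfolding e by (rule lead_coeff_mult)
  then have "coeff (ff c (Suc r)) (Suc r) = 1" using d Suc by simp
  then show ?case using d by simp
qed

lemma ff_poly: "poly (ff c r) x = (\<Prod>i<r. x - int (c + i))"
  unfolding ff_def poly_prod by (rule prod.cong) (simp_all add: algebra_simps)

lemma prod_choose: "(\<Prod>i<r. int M - int i) = int (fact r * (M choose r))"
proof -
  have "fact r * (of_nat M gchoose r :: rat) = (\<Prod>i = 0..<r. of_nat M - of_nat i)"
    by (rule gbinomial_mult_fact)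
  moreover have "(of_nat (M choose r) :: rat) = of_nat M gchoose r" by (rule binomial_gbinomial)
  ultimately have "(of_int (\<Prod>i<r. int M - int i) :: rat) = of_int (int (fact r * (M choose r)))"
    by (simp add: atLeast0LessThan of_nat_mult)
  then show ?thesis by (simp only: of_int_eq_iff)
qed

lemma poly_map_of_int: "poly (map_poly (of_int :: int \<Rightarrow> rat) p) (of_int x) = of_int (poly p x)"
  by (induction p) (simp_all add: map_poly_pCons)

lemma ceil_half: "\<lceil>of_int k / (2::rat)\<rceil> = (k + 1) div 2"
proof -
  have "\<lceil>of_int k / (2::rat)\<rceil> = - \<lfloor>of_int (- k) / of_int (2::int) :: rat\<rfloor>"
    by (simp add: ceiling_def)
  also have "\<dots> = - ((- k) div 2)" by (simp only: floor_divide_of_int_eq)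
  also have "\<dots> = (k + 1) div 2" by presburger
  finally show ?thesis .
qed

definition dd :: "int \<Rightarrow> nat" where "dd k = nat ((k + 1) div 2)"

definition cc :: "int \<Rightarrow> nat set \<times> nat set \<Rightarrow> nat" where
  "cc k p = card (fst p) + rr k p + card (snd p) + Lc k"

definition qq :: "int \<Rightarrow> nat set \<times> nat set \<Rightarrow> int poly" where
  "qq k p = smult (int (fact (dd k) div fact (rr k p))) (ff (cc k p) (rr k p))"

definition PP :: "int \<Rightarrow> int poly" where
  "PP k = (\<Sum>p\<in>Pat k. qq k p)"

definition p0 :: "int \<Rightarrow> nat set \<times> nat set" where
  "p0 k = (if even k then ({1}, {}) else ({}, {}))"

lemma W_empty: "W {} {} = 0" by (simp add: W_def PA_def)

lemma PA_one: "PA {1} = {1}" by (auto simp: PA_def)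

lemma W_one: "W {1} {} = 1" unfolding W_def PA_one by simp

lemma W_one': "W {Suc 0} {} = 1" using W_one by simp

lemma PA_one': "PA {Suc 0} = {Suc 0}" using PA_one by simp

context
  fixes k :: int
  assumes k: "-1 \<le> k"
begin

lemma rr_le: "p \<in> Pat k \<Longrightarrow> rr k p \<le> dd k"
  using Pat_facts(4)[of p k] by (simp add: dd_def rr_def)

lemma p0_in: "p0 k \<in> Pat k" "rr k (p0 k) = dd k"
proof -
  show "p0 k \<in> Pat k"
  proof (cases "even k")
    case True
    then have "0 \<le> k" using k by presburger
    then have "{1} \<subseteq> {0<..Lc k}" by (simp add: Lc_def)
    then show ?thesis using True k \<open>0 \<le> k\<close> by (simp add: p0_def Pat_def W_one W_one' PA_one PA_one')
  next
    case False
    then show ?thesis using k by (simp add: p0_def Pat_def W_empty)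
  qed
  show "rr k (p0 k) = dd k"
  proof (cases "even k")
    case True then show ?thesis by (simp add: p0_def rr_def dd_def W_one W_one')
  next
    case False then show ?thesis by (simp add: p0_def rr_def dd_def W_empty)
  qed
qed

lemma rr_eq: assumes p: "p \<in> Pat k" and r: "rr k p = dd k" shows "p = p0 k"
proof -
  obtain As B where pe: "p = (As, B)" by (cases p)
  note pf = Pat_facts[OF p]
  have finAs: "finite As" and As: "As \<subseteq> {0<..Lc k}" using pf pe by auto
  have finB: "finite B" using pf(3) pe PA_sub finAs finite_subset by (metis fst_conv snd_conv)
  have w: "int (W As B) + 2 * int (dd k) = k + 1" using pf(4) pe r by simp
  show ?thesis
  proof (cases "even k")
    case False
    then have "int (W As B) = 0" using w k by (simp add: dd_def) presburger
    then have "card (PA As) = 0" "card (As - PA As) = 0" "card B = 0" by (auto simp: W_def)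
    moreover have "finite (PA As)" using finAs PA_sub finite_subset by blast
    ultimately have "PA As = {}" "As - PA As = {}" "B = {}" using finAs finB by auto
    then have "As = {}" "B = {}" by auto
    then show ?thesis using pe False by (simp add: p0_def)
  next
    case True
    then have "int (W As B) = 1" using w k by (simp add: dd_def) presburger
    then have c: "card (PA As) + 2 * card (As - PA As) + 2 * card B = 1" by (simp add: W_def)
    then have "card (As - PA As) = 0" "card B = 0" "card (PA As) = 1" by arith+
    then have e: "As - PA As = {}" "B = {}" and c1: "card (PA As) = 1" using finAs finB by auto
    then obtain a where a: "PA As = {a}" by (meson card_1_singletonE)
    have AsA: "As = {a}" using e(1) a PA_sub[of As] by blast
    have a0: "0 < a" using As AsA by auto
    have "a = 1"
    proof (rule ccontr)
      assume "a \<noteq> 1"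
      then have "0 < (1::nat)" "1 < a" using a0 by auto
      moreover have "a \<in> PA {a}" using a AsA by simp
      ultimately have "1 \<in> {a} \<or> a - 1 \<in> {a}" unfolding PA_def by blast
      then show False using \<open>1 < a\<close> by auto
    qed
    then show ?thesis using pe AsA e True by (simp add: p0_def)
  qed
qed

lemma PP_coeff_high: "n > dd k \<Longrightarrow> coeff (PP k) n = 0"
proof -
  assume n: "n > dd k"
  have "coeff (qq k p) n = 0" if p: "p \<in> Pat k" for p
  proof -
    have "degree (qq k p) \<le> rr k p" unfolding qq_def
      using degree_smult_le ff_props by (metis)
    then show ?thesis using rr_le[OF p] n by (intro coeff_eq_0) linarith
  qed
  then show ?thesis by (simp add: PP_def coeff_sum)
qed

lemma PP_coeff_d: "coeff (PP k) (dd k) = 1"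
proof -
  have other: "coeff (qq k p) (dd k) = 0" if p: "p \<in> Pat k - {p0 k}" for p
  proof -
    have "rr k p \<noteq> dd k" using rr_eq p by blast
    then have lt: "rr k p < dd k" using rr_le p by (meson DiffD1 le_neq_implies_less)
    have "degree (qq k p) \<le> rr k p" unfolding qq_def
      using degree_smult_le ff_props by (metis)
    then show ?thesis using lt by (intro coeff_eq_0) linarith
  qed
  have "coeff (PP k) (dd k) = coeff (qq k (p0 k)) (dd k) + (\<Sum>p\<in>Pat k - {p0 k}. coeff (qq k p) (dd k))"
    unfolding PP_def coeff_sum using p0_in(1) Pat_fin by (simp add: sum.remove)
  also have "\<dots> = coeff (qq k (p0 k)) (dd k)" using other by simp
  also have "\<dots> = 1" using ff_props p0_in(2) by (simp add: qq_def)
  finally show ?thesis .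
qed

lemma PP_degree: "degree (PP k) = dd k" "lead_coeff (PP k) = 1"
proof -
  have "degree (PP k) \<le> dd k" using PP_coeff_high by (intro degree_le) auto
  moreover have "dd k \<le> degree (PP k)" using PP_coeff_d by (intro le_degree) simp
  ultimately show "degree (PP k) = dd k" by simp
  then show "lead_coeff (PP k) = 1" using PP_coeff_d by simp
qed

lemma PP_eval:
  assumes gk: "9*k + 7 \<le> 2 * int g"
  shows "poly (PP k) (int g) = int (fact (dd k)) *
    int (card {S \<in> semigroups_of_genus g. int (embedding_dimension S) = int g - k})"
proof -
  have cnt: "card {S \<in> semigroups_of_genus g. int (embedding_dimension S) = int g - k}
      = (\<Sum>p\<in>Pat k. (nn g k p - Lc k) choose rr k p)"
    using count_Trip[OF k gk] card_Trip[OF k gk] by simp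
  have tm: "poly (qq k p) (int g) = int (fact (dd k)) * int ((nn g k p - Lc k) choose rr k p)"
    if p: "p \<in> Pat k" for p
  proof -
    note pf = Pat_facts[OF p]
    have cg: "cc k p \<le> g" using pf(5) L_facts(2)[OF k gk] by (simp add: cc_def)
    have nn: "nn g k p - Lc k = g - cc k p" by (simp add: nn_def cc_def)
    have "poly (ff (cc k p) (rr k p)) (int g) = (\<Prod>i<rr k p. int (g - cc k p) - int i)"
      unfolding ff_poly using cg by (intro prod.cong) auto
    also have "\<dots> = int (fact (rr k p) * ((g - cc k p) choose rr k p))" by (rule prod_choose)
    finally have pf2: "poly (ff (cc k p) (rr k p)) (int g) = int (fact (rr k p) * ((g - cc k p) choose rr k p))" .
    have dv: "fact (rr k p) dvd (fact (dd k) :: nat)" using rr_le[OF p] by (rule fact_dvd)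
    have "poly (qq k p) (int g) = int (fact (dd k) div fact (rr k p) * fact (rr k p) * ((g - cc k p) choose rr k p))"
      unfolding qq_def using pf2 by simp
    also have "\<dots> = int (fact (dd k) * ((g - cc k p) choose rr k p))"
      using dv by simp
    finally show ?thesis using nn by simp
  qed
  have "poly (PP k) (int g) = (\<Sum>p\<in>Pat k. int (fact (dd k)) * int ((nn g k p - Lc k) choose rr k p))"
    unfolding PP_def poly_sum using tm by (intro sum.cong) auto
  also have "\<dots> = int (fact (dd k)) * int (\<Sum>p\<in>Pat k. (nn g k p - Lc k) choose rr k p)"
    by (simp add: sum_distrib_left)
  finally show ?thesis using cnt by simp
qed

end


theorem theorem1p13:
  fixes k :: int
  assumes "k \<ge> -1"
  shows "\<exists>h :: rat poly.
           degree h = nat \<lceil>of_int k / (2::rat)\<rceil> \<and>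
           (\<forall>g :: nat. of_nat g \<ge> (9 * of_int k + 7) / (2::rat) \<longrightarrow>
              of_nat (card {S \<in> semigroups_of_genus g.
                              int (embedding_dimension S) = int g - k})
              = poly h (of_nat g)) \<and>
           (\<exists>p :: int poly. lead_coeff p = 1 \<and>
              map_poly of_int p = smult (fact (nat \<lceil>of_int k / (2::rat)\<rceil>)) h)"
proof -
  have dk: "nat \<lceil>of_int k / (2::rat)\<rceil> = dd k" by (simp add: ceil_half dd_def)
  define h :: "rat poly" where "h = smult (1 / fact (dd k)) (map_poly of_int (PP k))"
  have deg: "degree h = dd k"
    unfolding h_def using PP_degree(1)[OF assms] by (simp add: degree_map_poly)
  have mp: "map_poly of_int (PP k) = smult (fact (dd k)) h"
    unfolding h_def by simp
  have ev: "of_nat (card {S \<in> semigroups_of_genus g. int (embedding_dimension S) = int g - k})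
              = poly h (of_nat g)" if g: "of_nat g \<ge> (9 * of_int k + 7) / (2::rat)" for g
  proof -
    have "(of_int (9 * k + 7) :: rat) \<le> of_int (2 * int g)" using g by simp
    then have gk: "9 * k + 7 \<le> 2 * int g" by (simp only: of_int_le_iff)
    let ?c = "card {S \<in> semigroups_of_genus g. int (embedding_dimension S) = int g - k}"
    have "poly h (of_nat g) = (1 / fact (dd k)) * poly (map_poly of_int (PP k)) (of_int (int g))"
      unfolding h_def by simp
    also have "\<dots> = (1 / fact (dd k)) * of_int (poly (PP k) (int g))"
      by (simp only: poly_map_of_int)
    also have "\<dots> = (1 / fact (dd k)) * of_int (int (fact (dd k)) * int ?c)"
      using PP_eval[OF assms gk] by simp
    also have "\<dots> = of_nat ?c" by simp
    finally show ?thesis by simp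
  qed
  show ?thesis
    unfolding dk using deg ev mp PP_degree(2)[OF assms] by blast
qed

end
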